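(* Let $n\ge2$, $0<k<n$, $l=n-k$. Let $Y_1=[0,1]$, and let each of $Y_2,\dots,Y_k,Z_1,\dots,Z_l$ be either $[0,1]$ or $[-5,5]$; set $Y=Y_1\times\cdots\times Y_k$, $Z=Z_1\times\cdots\times Z_l$, $X=Y\times Z\subseteq\mathbb{R}^n$. Let $f:Y_1\to\mathbb{R}$, $g:Z\to\mathbb{R}$, $h:\mathbb{R}^2\to\mathbb{R}$ be arbitrary functions, and consider the 2-objective problem on $X$ with objectives $f_1(y,z)=f(y_1)$ and $f_2(y,z)=g(z)\,h(f(y_1),g(z))$. Then this problem is not simple. (In particular the ZDT benchmark problems ZDT1–4 and ZDT6, which are of this form, are non-simple for every choice of $n$ and $k$.)
   Context: A problem is a finite set $\mathbf{f}=\{f_1,\dots,f_m\}$ of functions $f_i:\mathbb{R}^n\to\mathbb{R}$ together with a feasible region $X\subseteq\mathbb{R}^n$, to be minimized simultaneously. A subproblem $\mathbf{g}\subseteq\mathbf{f}$ is a subset of these functions (including $\emptyset$ and $\mathbf{f}$), with the same $X$; its evaluation map is $x\mapsto(f_i(x))_{f_i\in\mathbf{g}}\in\mathbb{R}^{|\mathbf{g}|}$. The Pareto set $X^*(\mathbf{g})$ is the set of $x^*\in X$ for which there is no $x\in X$ with $f_i(x)\le f_i(x^* )$ for all $f_i\in\mathbf{g}$ and $f_j(x)<f_j(x^* )$ for some $f_j\in\mathbf{g}$; by convention $X^*(\emptyset)=\emptyset$. A problem $\mathbf{f}$ is simple if every subproblem $\mathbf{g}\subseteq\mathbf{f}$ with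 $k=|\mathbf{g}|$ objectives satisfies: (S1) $X^*(\mathbf{g})$ is homeomorphic to $\Delta^{k-1}=\{t\in[0,1]^k:\sum t_i=1\}$ (with $\Delta^{-1}=\emptyset$); (S2) the evaluation map of $\mathbf{g}$ restricted to $X^*(\mathbf{g})$ is a topological embedding into $\mathbb{R}^k$. All sets carry the subspace topology from Euclidean space. *)

theory Defs
  imports "HOL-Analysis.Analysis"
begin

definition pareto_set :: "('a \<Rightarrow> real) set \<Rightarrow> 'a set \<Rightarrow> 'a set" where
  "pareto_set G X =
     (if G = {} then {}
      else {xs \<in> X. \<not> (\<exists>x\<in>X. (\<forall>fi\<in>G. fi x \<le> fi xs) \<and> (\<exists>fj\<in>G. fj x < fj xs))})"

text \<open>R^G is modelled as functions G-objective => real that vanish outside G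
  (product topology, which on this finite-dimensional subspace is Euclidean).\<close>
definition eval_map :: "('a \<Rightarrow> real) set \<Rightarrow> 'a \<Rightarrow> (('a \<Rightarrow> real) \<Rightarrow> real)" where
  "eval_map G x = (\<lambda>fi. if fi \<in> G then fi x else 0)"

text \<open>Standard simplex Delta^{|G|-1} in R^G (empty when G is empty).\<close>
definition std_simplex :: "('a \<Rightarrow> real) set \<Rightarrow> (('a \<Rightarrow> real) \<Rightarrow> real) set" where
  "std_simplex G = {t. (\<forall>fi. fi \<notin> G \<longrightarrow> t fi = 0) \<and> (\<forall>fi\<in>G. 0 \<le> t fi) \<and> sum t G = 1}"

definition simple_problem :: "('a::topological_space \<Rightarrow> real) set \<Rightarrow> 'a set \<Rightarrow> bool" where
  "simple_problem F X =
     (\<forall>G. G \<subseteq> F \<longrightarrow>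
        (pareto_set G X homeomorphic std_simplex G) \<and>
        (\<exists>e'. homeomorphism (pareto_set G X) (eval_map G ` pareto_set G X) (eval_map G) e'))"

end

theory Submission
  imports Defs
begin

theorem theorem2:
  fixes K :: "'n::finite set" and i1 :: 'n and wide :: "'n \<Rightarrow> bool"
    and f :: "real \<Rightarrow> real" and g :: "real^'n \<Rightarrow> real" and h :: "real \<times> real \<Rightarrow> real"
  assumes "i1 \<in> K" and "K \<noteq> UNIV"
  shows "\<not> simple_problem
           {(\<lambda>x::real^'n. f (x $ i1)),
            (\<lambda>x::real^'n. g (\<chi> i. if i \<in> K then 0 else x $ i) *
                 h (f (x $ i1), g (\<chi> i. if i \<in> K then 0 else x $ i)))}
           {x::real^'n. \<forall>i. x $ i \<in> (if i = i1 then {0..1}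
                                     else if wide i then {-5..5} else {0..1})}"
proof
  define f1 where "f1 = (\<lambda>x::real^'n. f (x $ i1))"
  define X where "X = {x::real^'n. \<forall>i. x $ i \<in> (if i = i1 then {0..1}
                                     else if wide i then {-5..5} else {0..1})}"
  assume "simple_problem
           {(\<lambda>x::real^'n. f (x $ i1)),
            (\<lambda>x::real^'n. g (\<chi> i. if i \<in> K then 0 else x $ i) *
                 h (f (x $ i1), g (\<chi> i. if i \<in> K then 0 else x $ i)))}
           {x::real^'n. \<forall>i. x $ i \<in> (if i = i1 then {0..1}
                                     else if wide i then {-5..5} else {0..1})}"
  then have "pareto_set {f1} X homeomorphic std_simplex {f1}"
    unfolding simple_problem_def f1_def X_def by blast
  then obtain a b where hm: "homeomorphism (pareto_set {f1} X) (std_simplex {f1}) a b"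
    unfolding homeomorphic_def by blast
  define t0 where "t0 = (\<lambda>fi. if fi = f1 then (1::real) else 0)"
  have "std_simplex {f1} = {t0}"
  proof (intro set_eqI iffI)
    fix t assume "t \<in> std_simplex {f1}"
    then have "\<forall>fi. fi \<noteq> f1 \<longrightarrow> t fi = 0" "t f1 = 1" unfolding std_simplex_def by auto
    then have "t = t0" unfolding t0_def by (intro ext) auto
    then show "t \<in> {t0}" by simp
  next
    fix t assume "t \<in> {t0}"
    then show "t \<in> std_simplex {f1}" unfolding std_simplex_def t0_def by auto
  qed
  then have P: "pareto_set {f1} X = {b t0}"
    using hm unfolding homeomorphism_def by (metis image_empty image_insert)
  define p where "p = b t0"
  have pP: "p \<in> pareto_set {f1} X" using P p_def by simp
  obtain j where j: "j \<notin> K" using assms(2) by blast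
  then have ji: "j \<noteq> i1" using assms(1) by blast
  define q where "q = (\<chi> i. if i = j then (if p $ j = 0 then 1 else 0) else p $ i)"
  have pX: "p \<in> X" and pmin: "\<not> (\<exists>x\<in>X. f1 x < f1 p)"
    using pP unfolding pareto_set_def by auto
  have qX: "q \<in> X" unfolding X_def
  proof (intro CollectI allI)
    fix i
    have "p $ i \<in> (if i = i1 then {0..1} else if wide i then {-5..5} else {0..1})"
      using pX unfolding X_def by blast
    then show "q $ i \<in> (if i = i1 then {0..1} else if wide i then {-5..5} else {0..1})"
      using ji unfolding q_def by (cases "i = j") auto
  qed
  have fq: "f1 q = f1 p" using ji unfolding f1_def q_def by simp
  have "q \<in> pareto_set {f1} X" using qX fq pmin unfolding pareto_set_def by auto
  moreover have "q \<noteq> p"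
  proof
    assume "q = p"
    then have "q $ j = p $ j" by simp
    then show False unfolding q_def by (auto split: if_splits)
  qed
  ultimately show False using P p_def by auto
qed

end
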